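(* Let $(G,M,\Delta)$ be a Garside structure, $(H,N,\delta)$ a parabolic substructure with $H\ne\{1\}$, and $T$ the set of $(H,N)$-reduced elements of $G$. Let $\mathcal S=\mathrm{Div}(\Delta)\setminus\{1\}$ and let $\lg$ denote word length in $G$ with respect to $\mathcal S$. For a right coset $C$ of $H$ in $G$ put $\lg(C)=\min\{\lg(\beta):\beta\in C\}$. Then $\lg(\theta)=\lg(H\theta)$ for every $\theta\in T$.
   Context: Let $G$ be a group and $M$ a submonoid with $M\cap M^{-1}=\{1\}$. Define partial orders on $G$ by $\alpha\le_L\beta$ iff $\alpha^{-1}\beta\in M$, and $\alpha\le_R\beta$ iff $\beta\alpha^{-1}\in M$. For $a\in M$ let $\mathrm{Div}_L(a)=\{b\in M: b\le_L a\}$, $\mathrm{Div}_R(a)=\{b\in M: b\le_R a\}$; $a$ is balanced if these coincide, and then $\mathrm{Div}(a)$ denotes this set. $M$ is Noetherian if each $a\in M$ admits an integer $n$ such that $a$ is not a product of more than $n$ non-trivial factors. A Garside structure $(G,M,\Delta)$ consists of such $G,M$ and a balanced $\Delta\in M$ such that: $M$ is Noetherian; $\mathrm{Div}(\Delta)$ is finite and generates $M$ as a monoid and $G$ as a group; $(G,\le_L)$ is a lattice (with meet $\wedge_L$). A parabolic substructure is a triple $(H,N,\delta)$ where $\delta\in M$ is balanced, $H$ (resp. $N$) is the subgroup of $G$ (resp. submonoid of $M$) generated by $\mathrm{Div}(\delta)$, and $\mathrm{Div}(\delta)=\mathrm{Div}(\Delta)\cap N$. Put $\omega=\delta^{-1}\Delta\in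 M$. An element $a\in M$ is unmovable if $\Delta\not\le_L a$. Every $\alpha\in G$ has a unique right $\Delta$-form $\alpha=a\Delta^p$ with $a\in M$ unmovable and $p\in\mathbb Z$. An element $a\in M$ is $N$-reduced if $a\wedge_L\delta=1$. An element $\alpha\in G$ with right $\Delta$-form $a\Delta^p$ is $(H,N)$-reduced if $a$ is $N$-reduced and either $p=0$, or $p<0$ and $\omega\not\le_L a$. *)

theory Defs
  imports "HOL-Algebra.Algebra"
begin

definition lprod :: "('a, 'b) monoid_scheme \<Rightarrow> 'a list \<Rightarrow> 'a" where
  "lprod G xs = foldr (\<lambda>x y. x \<otimes>\<^bsub>G\<^esub> y) xs \<one>\<^bsub>G\<^esub>"

definition monoid_gen :: "('a, 'b) monoid_scheme \<Rightarrow> 'a set \<Rightarrow> 'a set" where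
  "monoid_gen G A = {lprod G xs | xs. set xs \<subseteq> A}"

definition is_submonoid :: "('a, 'b) monoid_scheme \<Rightarrow> 'a set \<Rightarrow> bool" where
  "is_submonoid G M \<longleftrightarrow> M \<subseteq> carrier G \<and> \<one>\<^bsub>G\<^esub> \<in> M \<and>
     (\<forall>x\<in>M. \<forall>y\<in>M. x \<otimes>\<^bsub>G\<^esub> y \<in> M)"

definition leqL :: "('a, 'b) monoid_scheme \<Rightarrow> 'a set \<Rightarrow> 'a \<Rightarrow> 'a \<Rightarrow> bool" where
  "leqL G M \<alpha> \<beta> \<longleftrightarrow> inv\<^bsub>G\<^esub> \<alpha> \<otimes>\<^bsub>G\<^esub> \<beta> \<in> M"

definition leqR :: "('a, 'b) monoid_scheme \<Rightarrow> 'a set \<Rightarrow> 'a \<Rightarrow> 'a \<Rightarrow> bool" where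
  "leqR G M \<alpha> \<beta> \<longleftrightarrow> \<beta> \<otimes>\<^bsub>G\<^esub> inv\<^bsub>G\<^esub> \<alpha> \<in> M"

definition DivL :: "('a, 'b) monoid_scheme \<Rightarrow> 'a set \<Rightarrow> 'a \<Rightarrow> 'a set" where
  "DivL G M a = {b \<in> M. leqL G M b a}"

definition DivR :: "('a, 'b) monoid_scheme \<Rightarrow> 'a set \<Rightarrow> 'a \<Rightarrow> 'a set" where
  "DivR G M a = {b \<in> M. leqR G M b a}"

definition balanced :: "('a, 'b) monoid_scheme \<Rightarrow> 'a set \<Rightarrow> 'a \<Rightarrow> bool" where
  "balanced G M a \<longleftrightarrow> a \<in> M \<and> DivL G M a = DivR G M a"

text \<open>For balanced a, Div(a) is the common value; we use DivL.\<close>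
definition Div :: "('a, 'b) monoid_scheme \<Rightarrow> 'a set \<Rightarrow> 'a \<Rightarrow> 'a set" where
  "Div G M a = DivL G M a"

definition noetherian :: "('a, 'b) monoid_scheme \<Rightarrow> 'a set \<Rightarrow> bool" where
  "noetherian G M \<longleftrightarrow> (\<forall>a\<in>M. \<exists>n::nat. \<forall>xs. set xs \<subseteq> M - {\<one>\<^bsub>G\<^esub>} \<and> lprod G xs = a
       \<longrightarrow> length xs \<le> n)"

definition is_glbL :: "('a, 'b) monoid_scheme \<Rightarrow> 'a set \<Rightarrow> 'a \<Rightarrow> 'a \<Rightarrow> 'a \<Rightarrow> bool" where
  "is_glbL G M a b m \<longleftrightarrow> m \<in> carrier G \<and> leqL G M m a \<and> leqL G M m b \<and>
     (\<forall>c\<in>carrier G. leqL G M c a \<and> leqL G M c b \<longrightarrow> leqL G M c m)"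

definition is_lubL :: "('a, 'b) monoid_scheme \<Rightarrow> 'a set \<Rightarrow> 'a \<Rightarrow> 'a \<Rightarrow> 'a \<Rightarrow> bool" where
  "is_lubL G M a b j \<longleftrightarrow> j \<in> carrier G \<and> leqL G M a j \<and> leqL G M b j \<and>
     (\<forall>c\<in>carrier G. leqL G M a c \<and> leqL G M b c \<longrightarrow> leqL G M j c)"

definition latticeL :: "('a, 'b) monoid_scheme \<Rightarrow> 'a set \<Rightarrow> bool" where
  "latticeL G M \<longleftrightarrow> (\<forall>a\<in>carrier G. \<forall>b\<in>carrier G.
      (\<exists>m. is_glbL G M a b m) \<and> (\<exists>j. is_lubL G M a b j))"

definition meetL :: "('a, 'b) monoid_scheme \<Rightarrow> 'a set \<Rightarrow> 'a \<Rightarrow> 'a \<Rightarrow> 'a" where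
  "meetL G M a b = (THE m. is_glbL G M a b m)"

definition garside :: "('a, 'b) monoid_scheme \<Rightarrow> 'a set \<Rightarrow> 'a \<Rightarrow> bool" where
  "garside G M \<Delta> \<longleftrightarrow> group G \<and> is_submonoid G M \<and>
     {x \<in> M. inv\<^bsub>G\<^esub> x \<in> M} = {\<one>\<^bsub>G\<^esub>} \<and>
     balanced G M \<Delta> \<and> noetherian G M \<and> finite (Div G M \<Delta>) \<and>
     monoid_gen G (Div G M \<Delta>) = M \<and> generate G (Div G M \<Delta>) = carrier G \<and>
     latticeL G M"

definition parabolic :: "('a, 'b) monoid_scheme \<Rightarrow> 'a set \<Rightarrow> 'a \<Rightarrow> 'a set \<Rightarrow> 'a set \<Rightarrow> 'a \<Rightarrow> bool" where
  "parabolic G M \<Delta> H N \<delta> \<longleftrightarrow> balanced G M \<delta> \<and>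
     H = generate G (Div G M \<delta>) \<and> N = monoid_gen G (Div G M \<delta>) \<and>
     Div G M \<delta> = Div G M \<Delta> \<inter> N"

definition unmovable :: "('a, 'b) monoid_scheme \<Rightarrow> 'a set \<Rightarrow> 'a \<Rightarrow> 'a \<Rightarrow> bool" where
  "unmovable G M \<Delta> a \<longleftrightarrow> a \<in> M \<and> \<not> leqL G M \<Delta> a"

definition N_reduced :: "('a, 'b) monoid_scheme \<Rightarrow> 'a set \<Rightarrow> 'a \<Rightarrow> 'a \<Rightarrow> bool" where
  "N_reduced G M \<delta> a \<longleftrightarrow> a \<in> M \<and> meetL G M a \<delta> = \<one>\<^bsub>G\<^esub>"

text \<open>(H,N)-reduced: the right Delta-form a Delta^p (unique) satisfies the conditions.\<close>
definition HN_reduced :: "('a, 'b) monoid_scheme \<Rightarrow> 'a set \<Rightarrow> 'a \<Rightarrow> 'a \<Rightarrow> 'a \<Rightarrow> bool" where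
  "HN_reduced G M \<Delta> \<delta> \<alpha> \<longleftrightarrow> \<alpha> \<in> carrier G \<and>
     (\<exists>a (p::int). unmovable G M \<Delta> a \<and> \<alpha> = a \<otimes>\<^bsub>G\<^esub> (\<Delta> [^]\<^bsub>G\<^esub> p) \<and>
        N_reduced G M \<delta> a \<and>
        (p = 0 \<or> (p < 0 \<and> \<not> leqL G M (inv\<^bsub>G\<^esub> \<delta> \<otimes>\<^bsub>G\<^esub> \<Delta>) a)))"

definition word_len :: "('a, 'b) monoid_scheme \<Rightarrow> 'a set \<Rightarrow> 'a \<Rightarrow> nat" where
  "word_len G S \<alpha> = (LEAST n. \<exists>xs. length xs = n \<and>
      set xs \<subseteq> S \<union> (\<lambda>s. inv\<^bsub>G\<^esub> s) ` S \<and> lprod G xs = \<alpha>)"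

definition set_len :: "('a, 'b) monoid_scheme \<Rightarrow> 'a set \<Rightarrow> 'a set \<Rightarrow> nat" where
  "set_len G S C = (LEAST n. \<exists>\<beta>\<in>C. word_len G S \<beta> = n)"

end

theory Submission imports Defs begin

locale gar = group G for G (structure) +
  fixes M :: "'a set" and D :: 'a
  assumes Msub: "M \<subseteq> carrier G" and Mone: "\<one> \<in> M"
    and Mmult: "x \<in> M \<Longrightarrow> y \<in> M \<Longrightarrow> x \<otimes> y \<in> M"
    and Munit: "x \<in> M \<Longrightarrow> inv x \<in> M \<Longrightarrow> x = \<one>"
    and balD: "balanced G M D"
    and Mgen: "monoid_gen G (Div G M D) = M"
    and Ggen: "generate G (Div G M D) = carrier G"
    and lat: "latticeL G M"
begin

abbreviation lq where "lq x y \<equiv> leqL G M x y"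

lemma Mc: "x \<in> M \<Longrightarrow> x \<in> carrier G" using Msub by auto

lemma inv_cancel_l [simp]: "x \<in> carrier G \<Longrightarrow> y \<in> carrier G \<Longrightarrow> inv x \<otimes> (x \<otimes> y) = y"
  by (simp add: m_assoc[symmetric])
lemma inv_cancel_r [simp]: "x \<in> carrier G \<Longrightarrow> y \<in> carrier G \<Longrightarrow> x \<otimes> (inv x \<otimes> y) = y"
  by (simp add: m_assoc[symmetric])

lemma lq_def': "lq x y \<longleftrightarrow> inv x \<otimes> y \<in> M" by (simp add: leqL_def)

lemma lq_refl: "x \<in> carrier G \<Longrightarrow> lq x x"
  by (simp add: lq_def' Mone)

lemma lq_trans: "lq x y \<Longrightarrow> lq y z \<Longrightarrow> x \<in> carrier G \<Longrightarrow> y \<in> carrier G \<Longrightarrow> z \<in> carrier G \<Longrightarrow> lq x z"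
proof -
  assume a: "lq x y" "lq y z" and c: "x \<in> carrier G" "y \<in> carrier G" "z \<in> carrier G"
  have "(inv x \<otimes> y) \<otimes> (inv y \<otimes> z) \<in> M" using a Mmult by (simp add: lq_def')
  also have "(inv x \<otimes> y) \<otimes> (inv y \<otimes> z) = inv x \<otimes> z" using c
    by (simp add: m_assoc[symmetric]) (simp add: m_assoc)
  finally show ?thesis by (simp add: lq_def')
qed

lemma lq_antisym: "lq x y \<Longrightarrow> lq y x \<Longrightarrow> x \<in> carrier G \<Longrightarrow> y \<in> carrier G \<Longrightarrow> x = y"
proof -
  assume a: "lq x y" "lq y x" and c: "x \<in> carrier G" "y \<in> carrier G"
  have "inv (inv x \<otimes> y) = inv y \<otimes> x" using c by (simp add: inv_mult_group)
  hence "inv x \<otimes> y = \<one>" using a Munit by (simp add: lq_def')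
  thus ?thesis using c by (metis inv_equality inv_inv inv_closed)
qed

lemma lq_one: "y \<in> carrier G \<Longrightarrow> lq \<one> y \<longleftrightarrow> y \<in> M" by (simp add: lq_def')

lemma lq_left: "g \<in> carrier G \<Longrightarrow> x \<in> carrier G \<Longrightarrow> y \<in> carrier G \<Longrightarrow> lq (g \<otimes> x) (g \<otimes> y) \<longleftrightarrow> lq x y"
  by (simp add: lq_def' inv_mult_group m_assoc[symmetric]) (simp add: m_assoc)

lemma lq_M_one: "x \<in> M \<Longrightarrow> lq x \<one> \<Longrightarrow> x = \<one>"
  using Munit by (simp add: lq_def' Mc)

lemma lq_mult_M: "x \<in> carrier G \<Longrightarrow> y \<in> M \<Longrightarrow> lq x (x \<otimes> y)"
  by (simp add: lq_def' Mc m_assoc[symmetric])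

lemma lprod_Cons: "lprod G (x # xs) = x \<otimes> lprod G xs" by (simp add: lprod_def)
lemma lprod_Nil: "lprod G [] = \<one>" by (simp add: lprod_def)

lemma lprod_closed: "set xs \<subseteq> carrier G \<Longrightarrow> lprod G xs \<in> carrier G"
  by (induction xs) (auto simp: lprod_Cons lprod_Nil)

lemma lprod_append: "set xs \<subseteq> carrier G \<Longrightarrow> set ys \<subseteq> carrier G \<Longrightarrow>
   lprod G (xs @ ys) = lprod G xs \<otimes> lprod G ys"
  by (induction xs) (auto simp: lprod_Cons lprod_Nil m_assoc lprod_closed)

lemma monoid_gen_mult: "A \<subseteq> carrier G \<Longrightarrow> x \<in> monoid_gen G A \<Longrightarrow> y \<in> monoid_gen G A \<Longrightarrow> x \<otimes> y \<in> monoid_gen G A"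
proof -
  assume A: "A \<subseteq> carrier G" and x: "x \<in> monoid_gen G A" and y: "y \<in> monoid_gen G A"
  obtain xs where xs: "set xs \<subseteq> A" "x = lprod G xs" using x by (auto simp: monoid_gen_def)
  obtain ys where ys: "set ys \<subseteq> A" "y = lprod G ys" using y by (auto simp: monoid_gen_def)
  have "x \<otimes> y = lprod G (xs @ ys)" using xs ys A by (simp add: lprod_append subset_trans)
  thus ?thesis unfolding monoid_gen_def using xs ys by (intro CollectI exI[of _ "xs @ ys"]) auto
qed

lemma monoid_gen_one: "\<one> \<in> monoid_gen G A"
  unfolding monoid_gen_def by (rule CollectI, rule exI[of _ "[]"]) (simp add: lprod_Nil)

lemma monoid_gen_incl: "A \<subseteq> carrier G \<Longrightarrow> x \<in> A \<Longrightarrow> x \<in> monoid_gen G A"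
  unfolding monoid_gen_def by (rule CollectI, rule exI[of _ "[x]"]) (auto simp: lprod_Cons lprod_Nil)

lemma Div_sub: "Div G M b \<subseteq> M" by (auto simp: Div_def DivL_def)

lemma DivL_mem: "s \<in> Div G M b \<longleftrightarrow> s \<in> M \<and> inv s \<otimes> b \<in> M"
  by (simp add: Div_def DivL_def leqL_def)

lemma DivR_mem: "balanced G M b \<Longrightarrow> s \<in> Div G M b \<longleftrightarrow> s \<in> M \<and> b \<otimes> inv s \<in> M"
  by (simp add: balanced_def Div_def DivR_def leqR_def)

lemma bal_conj1: assumes b: "balanced G M b" and s: "s \<in> Div G M b"
  shows "inv b \<otimes> s \<otimes> b \<in> Div G M b"
proof -
  have bM: "b \<in> M" using b by (simp add: balanced_def)
  have sM: "s \<in> M" using s Div_sub by auto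
  let ?y = "inv s \<otimes> b"
  have yM: "?y \<in> M" using s DivL_mem by auto
  have "b \<otimes> inv ?y = s" using bM sM Mc by (simp add: inv_mult_group m_assoc[symmetric])
  hence "?y \<in> Div G M b" using yM DivR_mem[OF b] sM by simp
  hence "inv ?y \<otimes> b \<in> M"
    using DivL_mem by auto
  moreover have "inv ?y \<otimes> b = inv b \<otimes> s \<otimes> b" using bM sM Mc by (simp add: inv_mult_group)
  moreover have "b \<otimes> inv (inv ?y \<otimes> b) = ?y" using bM sM Mc
    by (simp add: inv_mult_group m_assoc[symmetric])
  ultimately show ?thesis using DivR_mem[OF b] yM by auto
qed

lemma bal_conj2: assumes b: "balanced G M b" and s: "s \<in> Div G M b"
  shows "b \<otimes> s \<otimes> inv b \<in> Div G M b"
proof -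
  have bM: "b \<in> M" using b by (simp add: balanced_def)
  have sM: "s \<in> M" using s Div_sub by auto
  let ?u = "b \<otimes> inv s"
  have uM: "?u \<in> M" using s DivR_mem[OF b] by auto
  have "inv ?u \<otimes> b = s" using bM sM Mc by (simp add: inv_mult_group m_assoc)
  hence "?u \<in> Div G M b" using uM DivL_mem sM by simp
  hence u2: "b \<otimes> inv ?u \<in> M" using DivR_mem[OF b] by auto
  have e: "b \<otimes> inv ?u = b \<otimes> s \<otimes> inv b" using bM sM Mc by (simp add: inv_mult_group m_assoc)
  have "inv (b \<otimes> s \<otimes> inv b) \<otimes> b = ?u" using bM sM Mc
    by (simp add: inv_mult_group m_assoc)
  thus ?thesis using u2 e uM DivL_mem by auto
qed


lemma gen_sub: "A \<subseteq> carrier G \<Longrightarrow> monoid_gen G A \<subseteq> carrier G"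
  by (auto simp: monoid_gen_def intro: lprod_closed)

lemma gen_M: "A \<subseteq> M \<Longrightarrow> monoid_gen G A \<subseteq> M"
proof
  fix x assume A: "A \<subseteq> M" and "x \<in> monoid_gen G A"
  then obtain xs where xs: "set xs \<subseteq> A" "x = lprod G xs" by (auto simp: monoid_gen_def)
  have "set xs \<subseteq> M \<Longrightarrow> lprod G xs \<in> M"
    by (induction xs) (auto simp: lprod_Cons lprod_Nil Mone Mmult)
  thus "x \<in> M" using xs A by auto
qed

lemma conj_gen: assumes b: "balanced G M b" and x: "x \<in> monoid_gen G (Div G M b)"
  shows "inv b \<otimes> x \<otimes> b \<in> monoid_gen G (Div G M b) \<and> b \<otimes> x \<otimes> inv b \<in> monoid_gen G (Div G M b)"
proof -
  have bc: "b \<in> carrier G" using b Mc by (simp add: balanced_def)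
  have DC: "Div G M b \<subseteq> carrier G" using Div_sub Msub by auto
  obtain xs where xs: "set xs \<subseteq> Div G M b" "x = lprod G xs" using x by (auto simp: monoid_gen_def)
  have "set xs \<subseteq> Div G M b \<Longrightarrow> inv b \<otimes> lprod G xs \<otimes> b \<in> monoid_gen G (Div G M b) \<and> b \<otimes> lprod G xs \<otimes> inv b \<in> monoid_gen G (Div G M b)"
  proof (induction xs)
    case Nil
    then show ?case using bc by (simp add: lprod_Nil monoid_gen_one)
  next
    case (Cons y ys)
    have yc: "y \<in> carrier G" using Cons DC by auto
    have pc: "lprod G ys \<in> carrier G" using Cons DC by (auto intro: lprod_closed)
    have e1: "inv b \<otimes> lprod G (y # ys) \<otimes> b = (inv b \<otimes> y \<otimes> b) \<otimes> (inv b \<otimes> lprod G ys \<otimes> b)"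
      using yc pc bc by (simp add: lprod_Cons m_assoc)
    have e2: "b \<otimes> lprod G (y # ys) \<otimes> inv b = (b \<otimes> y \<otimes> inv b) \<otimes> (b \<otimes> lprod G ys \<otimes> inv b)"
      using yc pc bc by (simp add: lprod_Cons m_assoc)
    have y1: "inv b \<otimes> y \<otimes> b \<in> monoid_gen G (Div G M b)"
      using bal_conj1[OF b] Cons monoid_gen_incl[OF DC] by auto
    have y2: "b \<otimes> y \<otimes> inv b \<in> monoid_gen G (Div G M b)"
      using bal_conj2[OF b] Cons monoid_gen_incl[OF DC] by auto
    show ?case using e1 e2 y1 y2 Cons monoid_gen_mult[OF DC] by auto
  qed
  thus ?thesis using xs by simp
qed

lemma conj_gen_pow: assumes b: "balanced G M b" and x: "x \<in> monoid_gen G (Div G M b)"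
  shows "inv (b [^] (n::nat)) \<otimes> x \<otimes> b [^] n \<in> monoid_gen G (Div G M b) \<and>
         b [^] n \<otimes> x \<otimes> inv (b [^] n) \<in> monoid_gen G (Div G M b)"
proof (induction n)
  case 0
  have "x \<in> carrier G" using x gen_sub Div_sub Msub by blast
  then show ?case using x by simp
next
  case (Suc n)
  have bc: "b \<in> carrier G" using b Mc by (simp add: balanced_def)
  have xc: "x \<in> carrier G" using x gen_sub Div_sub Msub by blast
  have e1: "inv (b [^] Suc n) \<otimes> x \<otimes> b [^] Suc n = inv b \<otimes> (inv (b [^] n) \<otimes> x \<otimes> b [^] n) \<otimes> b"
    using bc xc by (simp add: m_assoc inv_mult_group)
  have e2: "b [^] Suc n \<otimes> x \<otimes> inv (b [^] Suc n) = b \<otimes> (b [^] n \<otimes> x \<otimes> inv (b [^] n)) \<otimes> inv b"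
    using bc xc by (simp only: nat_pow_Suc2[OF bc]) (simp add: m_assoc inv_mult_group)
  show ?case using e1 e2 Suc conj_gen[OF b] by auto
qed

lemma DM: "D \<in> M" using balD by (simp add: balanced_def)
lemma Dc[simp]: "D \<in> carrier G" using DM Mc by auto

lemma conjM: "x \<in> M \<Longrightarrow> inv (D [^] (n::nat)) \<otimes> x \<otimes> D [^] n \<in> M \<and> D [^] n \<otimes> x \<otimes> inv (D [^] n) \<in> M"
  using conj_gen_pow[OF balD, of x n] Mgen by simp

lemma conjM1: "x \<in> M \<Longrightarrow> inv D \<otimes> x \<otimes> D \<in> M \<and> D \<otimes> x \<otimes> inv D \<in> M"
  using conj_gen[OF balD, of x] Mgen by simp

lemma powM: "b \<in> M \<Longrightarrow> b [^] (n::nat) \<in> M"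
  by (induction n) (auto simp: Mone Mmult)

lemma D_comm: "D \<otimes> D [^] (r::nat) = D [^] r \<otimes> D"
  by (metis Dc nat_pow_Suc nat_pow_Suc2)

lemma lq_rmult: "x \<in> carrier G \<Longrightarrow> y \<in> carrier G \<Longrightarrow> lq x y \<Longrightarrow> lq (x \<otimes> D [^] (n::nat)) (y \<otimes> D [^] n)"
proof -
  assume c: "x \<in> carrier G" "y \<in> carrier G" and l: "lq x y"
  have "inv (D [^] n) \<otimes> (inv x \<otimes> y) \<otimes> D [^] n \<in> M" using conjM l by (simp add: lq_def')
  moreover have "inv (D [^] n) \<otimes> (inv x \<otimes> y) \<otimes> D [^] n = inv (x \<otimes> D [^] n) \<otimes> (y \<otimes> D [^] n)"
    using c by (simp add: m_assoc inv_mult_group)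
  ultimately show ?thesis by (simp add: lq_def')
qed

lemma lq_rmult_inv: "x \<in> carrier G \<Longrightarrow> y \<in> carrier G \<Longrightarrow> lq x y \<Longrightarrow> lq (x \<otimes> inv (D [^] (n::nat))) (y \<otimes> inv (D [^] n))"
proof -
  assume c: "x \<in> carrier G" "y \<in> carrier G" and l: "lq x y"
  have "D [^] n \<otimes> (inv x \<otimes> y) \<otimes> inv (D [^] n) \<in> M" using conjM l by (simp add: lq_def')
  moreover have "D [^] n \<otimes> (inv x \<otimes> y) \<otimes> inv (D [^] n) = inv (x \<otimes> inv (D [^] n)) \<otimes> (y \<otimes> inv (D [^] n))"
    using c by (simp add: m_assoc inv_mult_group)
  ultimately show ?thesis by (simp add: lq_def')
qed

lemma lq_Dn: "y \<in> M \<Longrightarrow> lq (D [^] (n::nat)) (y \<otimes> D [^] n)"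
  using conjM[of y n] Mc by (simp add: lq_def' m_assoc)

lemma lub_ex: "x \<in> carrier G \<Longrightarrow> y \<in> carrier G \<Longrightarrow> \<exists>j. is_lubL G M x y j"
  using lat by (simp add: latticeL_def)

lemma glb_ex: "x \<in> carrier G \<Longrightarrow> y \<in> carrier G \<Longrightarrow> \<exists>j. is_glbL G M x y j"
  using lat by (simp add: latticeL_def)

lemma trick: assumes z: "z \<in> M" and w: "w \<in> M" and l: "lq z (w \<otimes> D [^] (m::nat))"
  shows "\<exists>\<rho>\<in>M. lq \<rho> z \<and> lq \<rho> w \<and> (\<rho> = \<one> \<longrightarrow> lq z (D [^] m))"
proof -
  have zc: "z \<in> carrier G" and wc: "w \<in> carrier G" using z w Mc by auto
  obtain J where J: "is_lubL G M z (D [^] m) J" using lub_ex[OF zc, of "D [^] m"] by auto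
  have Jc: "J \<in> carrier G" and J1: "lq z J" and J2: "lq (D [^] m) J"
    and J3: "\<And>c. c \<in> carrier G \<Longrightarrow> lq z c \<Longrightarrow> lq (D [^] m) c \<Longrightarrow> lq J c"
    using J by (auto simp: is_lubL_def)
  define \<rho> where "\<rho> = J \<otimes> inv (D [^] m)"
  have "D [^] m \<otimes> (inv (D [^] m) \<otimes> J) \<otimes> inv (D [^] m) \<in> M"
    using conjM J2 by (simp add: lq_def')
  hence rM: "\<rho> \<in> M" using Jc by (simp add: \<rho>_def m_assoc)
  have a1: "lq J (z \<otimes> D [^] m)" using J3 lq_mult_M[OF zc powM[OF DM]] lq_Dn[OF z] zc by simp
  have a2: "lq J (w \<otimes> D [^] m)" using J3 l lq_Dn[OF w] wc by simp
  have b1: "lq \<rho> z" using lq_rmult_inv[OF Jc _ a1, of m] zc by (simp add: \<rho>_def m_assoc)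
  have b2: "lq \<rho> w" using lq_rmult_inv[OF Jc _ a2, of m] wc by (simp add: \<rho>_def m_assoc)
  have "\<rho> = \<one> \<Longrightarrow> lq z (D [^] m)"
  proof -
    assume "\<rho> = \<one>"
    hence "J = D [^] m" using Jc by (simp add: \<rho>_def inv_solve_right')
    thus ?thesis using J1 by simp
  qed
  thus ?thesis using rM b1 b2 by auto
qed

lemma K: assumes a: "a \<in> M" and l: "lq a (D [^] Suc m)"
  shows "\<exists>s a'. s \<in> Div G M D \<and> a' \<in> M \<and> a = s \<otimes> a' \<and> lq a' (D [^] m)"
proof -
  have ac: "a \<in> carrier G" using a Mc by auto
  obtain s where s: "is_glbL G M a D s" using glb_ex[OF ac Dc] by auto
  have sc: "s \<in> carrier G" and s1: "lq s a" and s2: "lq s D"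
    and s3: "\<And>c. c \<in> carrier G \<Longrightarrow> lq c a \<Longrightarrow> lq c D \<Longrightarrow> lq c s"
    using s by (auto simp: is_glbL_def)
  have sM: "s \<in> M" using s3[of \<one>] a DM sc ac by (simp add: lq_one)
  have sD: "s \<in> Div G M D" using sM s2 by (simp add: DivL_mem lq_def')
  define a' where "a' = inv s \<otimes> a"
  have a'M: "a' \<in> M" using s1 by (simp add: a'_def lq_def')
  have a'c: "a' \<in> carrier G" using a'M Mc by auto
  have e: "a = s \<otimes> a'" using sc ac by (simp add: a'_def)
  have wM: "inv s \<otimes> D \<in> M" using s2 by (simp add: lq_def')
  have "lq (inv s \<otimes> a) (inv s \<otimes> (D \<otimes> D [^] m))"
    using lq_left[of "inv s" a "D \<otimes> D [^] m"] l sc ac D_comm by simp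
  hence l2: "lq a' ((inv s \<otimes> D) \<otimes> D [^] m)" using sc by (simp add: a'_def m_assoc)
  obtain \<rho> where r: "\<rho> \<in> M" "lq \<rho> a'" "lq \<rho> (inv s \<otimes> D)" "\<rho> = \<one> \<longrightarrow> lq a' (D [^] m)"
    using trick[OF a'M wM l2] by blast
  have rc: "\<rho> \<in> carrier G" using r Mc by auto
  have "lq (s \<otimes> \<rho>) a" using lq_left[of s \<rho> a'] r sc rc a'c e by simp
  moreover have "lq (s \<otimes> \<rho>) D" using lq_left[of s \<rho> "inv s \<otimes> D"] r sc rc by simp
  ultimately have "lq (s \<otimes> \<rho>) (s \<otimes> \<one>)" using s3[of "s \<otimes> \<rho>"] sc rc by simp
  hence "lq \<rho> \<one>" using lq_left[of s \<rho> \<one>] sc rc by simp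
  hence "\<rho> = \<one>" using lq_M_one r by simp
  thus ?thesis using r sD a'M e by auto
qed


abbreviation SS where "SS \<equiv> Div G M D - {\<one>}"
abbreviation LL where "LL \<equiv> SS \<union> (\<lambda>s. inv s) ` SS"

definition hw where "hw \<beta> n \<longleftrightarrow> (\<exists>xs. length xs \<le> n \<and> set xs \<subseteq> LL \<and> lprod G xs = \<beta>)"

lemma DivD_c: "s \<in> Div G M D \<Longrightarrow> s \<in> carrier G" using Div_sub Mc by auto

lemma LLc: "LL \<subseteq> carrier G" using DivD_c by auto

lemma hw_one: "hw \<one> n"
  unfolding hw_def by (rule exI[of _ "[]"]) (simp add: lprod_Nil)

lemma hw_mono: "hw x n \<Longrightarrow> n \<le> m \<Longrightarrow> hw x m"
proof -
  assume "hw x n" "n \<le> m"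
  then obtain xs where "length xs \<le> n" "set xs \<subseteq> LL" "lprod G xs = x" unfolding hw_def by blast
  thus ?thesis unfolding hw_def using \<open>n \<le> m\<close> by (intro exI[of _ xs]) auto
qed

lemma hw_simple: "s \<in> Div G M D \<Longrightarrow> hw s 1"
proof (cases "s = \<one>")
  case True thus ?thesis by (simp add: hw_one)
next
  case False
  assume "s \<in> Div G M D"
  thus ?thesis unfolding hw_def using False DivD_c
    by (intro exI[of _ "[s]"]) (simp add: lprod_Cons lprod_Nil)
qed

lemma hw_inv: "s \<in> Div G M D \<Longrightarrow> hw (inv s) 1"
proof (cases "s = \<one>")
  case True thus ?thesis by (simp add: hw_one)
next
  case False
  assume "s \<in> Div G M D"
  thus ?thesis unfolding hw_def using False DivD_c
    by (intro exI[of _ "[inv s]"]) (auto simp: lprod_Cons lprod_Nil)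
qed

lemma hw_mult: "hw x n \<Longrightarrow> hw y m \<Longrightarrow> hw (x \<otimes> y) (n + m)"
proof -
  assume "hw x n" "hw y m"
  then obtain xs ys where xs: "length xs \<le> n" "set xs \<subseteq> LL" "lprod G xs = x"
    and ys: "length ys \<le> m" "set ys \<subseteq> LL" "lprod G ys = y" unfolding hw_def by blast
  have c1: "set xs \<subseteq> carrier G" using xs(2) LLc by blast
  have c2: "set ys \<subseteq> carrier G" using ys(2) LLc by blast
  have "lprod G (xs @ ys) = x \<otimes> y" using lprod_append[OF c1 c2] xs ys by simp
  thus ?thesis unfolding hw_def using xs ys by (intro exI[of _ "xs @ ys"]) auto
qed

lemma D_Div: "D \<in> Div G M D" using DM by (simp add: DivL_mem Mone)

lemma compl_R: "s \<in> Div G M D \<Longrightarrow> D \<otimes> inv s \<in> Div G M D"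
proof -
  assume s: "s \<in> Div G M D"
  have "D \<otimes> inv s \<in> M" using s DivR_mem[OF balD] by auto
  moreover have "inv (D \<otimes> inv s) \<otimes> D = s" using s DivD_c by (simp add: inv_mult_group m_assoc)
  ultimately show ?thesis using s Div_sub by (auto simp: DivL_mem)
qed

lemma hw_nf: "a \<in> M \<Longrightarrow> lq a (D [^] (r::nat)) \<Longrightarrow> hw a r"
proof (induction r arbitrary: a)
  case 0
  hence "a = \<one>" using lq_M_one by simp
  thus ?case by (simp add: hw_one)
next
  case (Suc r)
  obtain s a' where sa: "s \<in> Div G M D" "a' \<in> M" "a = s \<otimes> a'" "lq a' (D [^] r)"
    using K[OF Suc.prems] by blast
  show ?case using hw_mult[OF hw_simple[OF sa(1)] Suc.IH[OF sa(2) sa(4)]] sa(3) by simp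
qed

lemma hw_neg: "a \<in> M \<Longrightarrow> lq a (D [^] (r::nat)) \<Longrightarrow> hw (a \<otimes> inv (D [^] (q::nat))) (max r q)"
proof (induction q arbitrary: a r)
  case 0
  then show ?case using hw_nf[OF 0(1,2)] Mc hw_mono by simp
next
  case (Suc q)
  show ?case
  proof (cases r)
    case 0
    hence a1: "a = \<one>" using Suc.prems lq_M_one by simp
    have "hw (\<one> \<otimes> inv (D [^] q)) q" using Suc.IH[of \<one> 0] Mone lq_refl by simp
    hence "hw (inv D \<otimes> inv (D [^] q)) (1 + q)" using hw_mult[OF hw_inv[OF D_Div]] by simp
    thus ?thesis using a1 0 by (simp add: inv_mult_group)
  next
    case (Suc r')
    obtain s a' where sa: "s \<in> Div G M D" "a' \<in> M" "a = s \<otimes> a'" "lq a' (D [^] r')"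
      using K Suc.prems Suc by blast
    have sc: "s \<in> carrier G" and a'c: "a' \<in> carrier G" using sa DivD_c Mc by auto
    define a'' where "a'' = D \<otimes> a' \<otimes> inv D"
    have a''M: "a'' \<in> M" using conjM1 sa by (simp add: a''_def)
    have "lq (D \<otimes> a') (D \<otimes> D [^] r')" using lq_left[of D a' "D [^] r'"] sa a'c by simp
    hence "lq (D \<otimes> a' \<otimes> inv (D [^] (1::nat))) (D \<otimes> D [^] r' \<otimes> inv (D [^] (1::nat)))"
      using lq_rmult_inv[of "D \<otimes> a'" "D \<otimes> D [^] r'" 1] a'c by simp
    hence l: "lq a'' (D [^] r')" by (simp add: a''_def D_comm m_assoc)
    have h1: "hw (a'' \<otimes> inv (D [^] q)) (max r' q)" using Suc.IH[OF a''M l] .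
    have h2: "hw (inv (D \<otimes> inv s)) 1" using hw_inv[OF compl_R[OF sa(1)]] .
    have "inv (D \<otimes> inv s) \<otimes> (a'' \<otimes> inv (D [^] q)) = a \<otimes> inv (D [^] Suc q)"
      using sc a'c sa(3) by (simp add: a''_def inv_mult_group m_assoc)
    thus ?thesis using hw_mult[OF h2 h1] Suc by simp
  qed
qed

lemma word_exists: "x \<in> carrier G \<Longrightarrow> \<exists>n. hw x n"
proof -
  assume "x \<in> carrier G"
  hence "x \<in> generate G (Div G M D)" using Ggen by simp
  thus ?thesis
  proof (induction rule: generate.induct)
    case one thus ?case using hw_one by blast
  next
    case (incl h) thus ?case using hw_simple by blast
  next
    case (inv h) thus ?case using hw_inv by blast
  next
    case (eng h1 h2) thus ?case using hw_mult by blast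
  qed
qed

lemma wb_pos: assumes x: "x \<in> Div G M D" and Pc: "P \<in> carrier G"
  and k: "lq P (D [^] (k::nat))" and l: "lq (inv (D [^] (l::nat))) P"
  shows "lq (x \<otimes> P) (D [^] Suc k) \<and> lq (inv (D [^] l)) (x \<otimes> P)"
proof -
  have xc: "x \<in> carrier G" using x DivD_c by auto
  have xM: "x \<in> M" using x Div_sub by auto
  have u1: "lq (x \<otimes> P) (x \<otimes> D [^] k)" using lq_left[of x P "D [^] k"] k xc Pc by simp
  have "inv x \<otimes> D \<in> M" using x by (simp add: DivL_mem)
  hence "inv (D [^] k) \<otimes> (inv x \<otimes> D) \<otimes> D [^] k \<in> M" using conjM by blast
  moreover have "inv (D [^] k) \<otimes> (inv x \<otimes> D) \<otimes> D [^] k = inv (x \<otimes> D [^] k) \<otimes> D [^] Suc k"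
    using xc by (simp only: nat_pow_Suc2[OF Dc]) (simp add: inv_mult_group m_assoc)
  ultimately have u2: "lq (x \<otimes> D [^] k) (D [^] Suc k)" by (simp only: lq_def')
  have "D [^] l \<otimes> x \<otimes> inv (D [^] l) \<in> M" using conjM xM by blast
  hence v1: "lq (inv (D [^] l)) (x \<otimes> inv (D [^] l))" using xc by (simp add: lq_def' m_assoc)
  have v2: "lq (x \<otimes> inv (D [^] l)) (x \<otimes> P)" using lq_left[of x "inv (D [^] l)" P] l xc Pc by simp
  have w1: "lq (x \<otimes> P) (D [^] Suc k)" by (rule lq_trans[OF u1 u2]) (use xc Pc in auto)
  have w2: "lq (inv (D [^] l)) (x \<otimes> P)" by (rule lq_trans[OF v1 v2]) (use xc Pc in auto)
  show ?thesis using w1 w2 by blast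
qed

lemma wb_neg: assumes s: "s \<in> Div G M D" and Pc: "P \<in> carrier G"
  and k: "lq P (D [^] (k::nat))" and l: "lq (inv (D [^] (l::nat))) P"
  shows "lq (inv s \<otimes> P) (D [^] k) \<and> lq (inv (D [^] Suc l)) (inv s \<otimes> P)"
proof -
  have sc: "s \<in> carrier G" using s DivD_c by auto
  have sM: "s \<in> M" using s Div_sub by auto
  have u1: "lq (inv s \<otimes> P) (inv s \<otimes> D [^] k)" using lq_left[of "inv s" P "D [^] k"] k sc Pc by simp
  have "inv (D [^] k) \<otimes> s \<otimes> D [^] k \<in> M" using conjM sM by blast
  hence u2: "lq (inv s \<otimes> D [^] k) (D [^] k)" using sc
    by (simp add: lq_def' inv_mult_group m_assoc)
  have "D \<otimes> inv s \<in> M" using s DivR_mem[OF balD] by blast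
  hence "D [^] l \<otimes> (D \<otimes> inv s) \<otimes> inv (D [^] l) \<in> M" using conjM by blast
  moreover have "D [^] l \<otimes> (D \<otimes> inv s) \<otimes> inv (D [^] l) = inv (inv (D [^] Suc l)) \<otimes> (inv s \<otimes> inv (D [^] l))"
    using sc by (simp add: m_assoc)
  ultimately have v1: "lq (inv (D [^] Suc l)) (inv s \<otimes> inv (D [^] l))" by (simp only: lq_def')
  have v2: "lq (inv s \<otimes> inv (D [^] l)) (inv s \<otimes> P)" using lq_left[of "inv s" "inv (D [^] l)" P] l sc Pc by simp
  have w1: "lq (inv s \<otimes> P) (D [^] k)" by (rule lq_trans[OF u1 u2]) (use sc Pc in auto)
  have w2: "lq (inv (D [^] Suc l)) (inv s \<otimes> P)" by (rule lq_trans[OF v1 v2]) (use sc Pc in auto)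
  show ?thesis using w1 w2 by blast
qed

lemma word_bounds: "set xs \<subseteq> LL \<Longrightarrow> \<exists>k l. k + l = length xs \<and> lq (lprod G xs) (D [^] (k::nat)) \<and> lq (inv (D [^] (l::nat))) (lprod G xs)"
proof (induction xs)
  case Nil
  then show ?case by (intro exI[of _ 0]) (simp add: lprod_Nil lq_refl)
next
  case (Cons x xs)
  have sx: "set xs \<subseteq> LL" and xL: "x \<in> LL" using Cons.prems by auto
  obtain k l where kl: "k + l = length xs" "lq (lprod G xs) (D [^] k)" "lq (inv (D [^] l)) (lprod G xs)"
    using Cons.IH[OF sx] by blast
  have Pc: "lprod G xs \<in> carrier G" by (rule lprod_closed) (use sx LLc in blast)
  show ?case
  proof (cases "x \<in> SS")
    case True
    hence "x \<in> Div G M D" by blast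
    from wb_pos[OF this Pc kl(2,3)] have "lq (lprod G (x # xs)) (D [^] Suc k) \<and> lq (inv (D [^] l)) (lprod G (x # xs))"
      by (simp only: lprod_Cons)
    thus ?thesis using kl(1) by (intro exI[of _ "Suc k"] exI[of _ l]) simp
  next
    case False
    then obtain s where s: "s \<in> SS" "x = inv s" using xL by blast
    hence "s \<in> Div G M D" by blast
    from wb_neg[OF this Pc kl(2,3)] s have "lq (lprod G (x # xs)) (D [^] k) \<and> lq (inv (D [^] Suc l)) (lprod G (x # xs))"
      by (simp only: lprod_Cons)
    thus ?thesis using kl(1) by (intro exI[of _ k] exI[of _ "Suc l"]) simp
  qed
qed


lemma nontriv: assumes r: "\<rho> \<in> M" and n: "\<rho> \<noteq> \<one>"
  shows "\<exists>s\<in>Div G M D. s \<noteq> \<one> \<and> lq s \<rho>"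
proof -
  obtain xs where xs: "set xs \<subseteq> Div G M D" "\<rho> = lprod G xs" using r Mgen by (auto simp: monoid_gen_def)
  have "set xs \<subseteq> Div G M D \<Longrightarrow> lprod G xs \<noteq> \<one> \<Longrightarrow> \<exists>s\<in>Div G M D. s \<noteq> \<one> \<and> lq s (lprod G xs)"
  proof (induction xs)
    case Nil thus ?case by (simp add: lprod_Nil)
  next
    case (Cons x xs)
    have "lprod G xs \<in> monoid_gen G (Div G M D)" unfolding monoid_gen_def using Cons.prems by auto
    hence PM: "lprod G xs \<in> M" using Mgen by simp
    show ?case
    proof (cases "x = \<one>")
      case True
      thus ?thesis using Cons PM Mc by (simp add: lprod_Cons)
    next
      case False
      have "lq x (lprod G (x # xs))" using lq_mult_M[OF _ PM, of x] Cons.prems DivD_c by (simp add: lprod_Cons)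
      thus ?thesis using False Cons.prems by auto
    qed
  qed
  thus ?thesis using xs n by simp
qed

lemma lq_pow_list: assumes b: "balanced G M b"
  shows "set xs \<subseteq> Div G M b \<Longrightarrow> lq (lprod G xs) (b [^] length xs)"
proof (induction xs)
  case Nil thus ?case by (simp add: lprod_Nil lq_refl)
next
  case (Cons s xs)
  have bM: "b \<in> M" using b by (simp add: balanced_def)
  have bc: "b \<in> carrier G" using bM Mc by simp
  have sc: "s \<in> carrier G" using Cons.prems Div_sub Mc by auto
  have Pc: "lprod G xs \<in> carrier G" by (rule lprod_closed) (use Cons.prems Div_sub Msub in auto)
  have u1: "lq (s \<otimes> lprod G xs) (s \<otimes> b [^] length xs)" using lq_left Cons sc Pc bc by simp
  have "inv s \<otimes> b \<in> M" using Cons.prems by (simp add: DivL_mem)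
  moreover have "inv (inv s \<otimes> b) \<otimes> b = inv b \<otimes> s \<otimes> b" using sc bc by (simp add: inv_mult_group)
  moreover have "inv b \<otimes> s \<otimes> b \<in> M" using bal_conj1[OF b, of s] Cons.prems Div_sub by auto
  ultimately have "inv s \<otimes> b \<in> Div G M b" by (simp add: DivL_mem)
  hence "inv (b [^] length xs) \<otimes> (inv s \<otimes> b) \<otimes> b [^] length xs \<in> monoid_gen G (Div G M b)"
    using conj_gen_pow[OF b] monoid_gen_incl[of "Div G M b"] Div_sub Msub by blast
  hence "inv (b [^] length xs) \<otimes> (inv s \<otimes> b) \<otimes> b [^] length xs \<in> M"
    using gen_M[OF Div_sub] by blast
  hence u2: "lq (s \<otimes> b [^] length xs) (b [^] length (s # xs))" using sc bc
    by (simp only: length_Cons nat_pow_Suc2[OF bc]) (simp add: lq_def' inv_mult_group m_assoc)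
  show ?case using lq_trans[OF u1 u2] sc Pc bc by (simp add: lprod_Cons)
qed

lemma M_le: "a \<in> M \<Longrightarrow> \<exists>r. lq a (D [^] (r::nat))"
proof -
  assume "a \<in> M"
  hence "a \<in> monoid_gen G (Div G M D)" using Mgen by simp
  then obtain xs where "set xs \<subseteq> Div G M D" "a = lprod G xs" unfolding monoid_gen_def by blast
  thus ?thesis using lq_pow_list[OF balD] by blast
qed

end

locale para = gar +
  fixes d :: 'a and N H :: "'a set"
  assumes bald: "balanced G M d" and Hdef: "H = generate G (Div G M d)"
    and Ndef: "N = monoid_gen G (Div G M d)" and Divd: "Div G M d = Div G M D \<inter> N"
begin

lemma dM: "d \<in> M" using bald by (simp add: balanced_def)
lemma dc[simp]: "d \<in> carrier G" using dM Mc by simp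
lemma d_Divd: "d \<in> Div G M d" using dM by (simp add: DivL_mem Mone)
lemma NM: "N \<subseteq> M" using gen_M[OF Div_sub] Ndef by simp
lemma Divdc: "Div G M d \<subseteq> carrier G" using Div_sub Msub by blast
lemma DivdN: "Div G M d \<subseteq> N" using Ndef monoid_gen_incl[OF Divdc] by blast
lemma dN: "d \<in> N" using d_Divd DivdN by auto
lemma d_DivD: "d \<in> Div G M D" using d_Divd Divd by auto
lemma omM: "inv d \<otimes> D \<in> M" using d_DivD by (simp add: DivL_mem)
lemma Nmult: "x \<in> N \<Longrightarrow> y \<in> N \<Longrightarrow> x \<otimes> y \<in> N"
  using monoid_gen_mult[OF Divdc] Ndef by blast
lemma conjN: "x \<in> N \<Longrightarrow> inv (d [^] (n::nat)) \<otimes> x \<otimes> d [^] n \<in> N \<and> d [^] n \<otimes> x \<otimes> inv (d [^] n) \<in> N"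
  using conj_gen_pow[OF bald] Ndef by simp

lemma lq_om_D: "lq (inv d \<otimes> D) D"
  using conjM1[OF dM] by (simp add: lq_def' inv_mult_group m_assoc)
lemma lq_d_D: "lq d D" using omM by (simp add: lq_def')

lemma cop_d_om: assumes t: "t \<in> M" "lq t d" "lq t (inv d \<otimes> D)" shows "t = \<one>"
proof -
  have tc: "t \<in> carrier G" using t Mc by simp
  have "t \<in> Div G M d" using t by (simp add: DivL_mem lq_def')
  hence tN: "t \<in> N" using DivdN by auto
  have dtN: "d \<otimes> t \<in> N" using Nmult dN tN by simp
  have dtM: "d \<otimes> t \<in> M" using dtN NM by auto
  have "inv (d \<otimes> t) \<otimes> D \<in> M" using t tc by (simp add: lq_def' inv_mult_group m_assoc)
  hence "d \<otimes> t \<in> Div G M D" using dtM by (simp add: DivL_mem)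
  hence "d \<otimes> t \<in> Div G M d" using Divd dtN by simp
  hence "inv (d \<otimes> t) \<otimes> d \<in> M" by (simp add: DivL_mem)
  hence "inv t \<in> M" using tc by (simp add: inv_mult_group m_assoc)
  thus ?thesis using Munit t by simp
qed

lemma join_om_d: assumes X: "z \<in> carrier G" "lq (inv d \<otimes> D) z" "lq d z" shows "lq D z"
proof -
  obtain J where J: "is_lubL G M (inv d \<otimes> D) d J" using lub_ex[of "inv d \<otimes> D" d] by auto
  have Jc: "J \<in> carrier G" and J1: "lq (inv d \<otimes> D) J" and J2: "lq d J"
    and J3: "\<And>c. c \<in> carrier G \<Longrightarrow> lq (inv d \<otimes> D) c \<Longrightarrow> lq d c \<Longrightarrow> lq J c"
    using J by (auto simp: is_lubL_def)
  have JD: "lq J D" using J3[OF Dc lq_om_D lq_d_D] .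
  define t where "t = D \<otimes> inv J"
  have tc: "t \<in> carrier G" using Jc by (simp add: t_def)
  have "D \<otimes> (inv J \<otimes> D) \<otimes> inv D \<in> M" using conjM1 JD by (simp add: lq_def')
  hence tM: "t \<in> M" using Jc by (simp add: t_def m_assoc)
  have it: "inv t = J \<otimes> inv D" using Jc by (simp add: t_def inv_mult_group)
  have "D \<otimes> (inv (inv d \<otimes> D) \<otimes> J) \<otimes> inv D \<in> M" using conjM1 J1 by (simp add: lq_def')
  hence e1: "d \<otimes> inv t \<in> M" using Jc by (simp add: it inv_mult_group m_assoc)
  have "D \<otimes> (inv d \<otimes> J) \<otimes> inv D \<in> M" using conjM1 J2 by (simp add: lq_def')
  hence e2: "D \<otimes> inv (t \<otimes> d) \<in> M" using Jc tc by (simp add: it inv_mult_group m_assoc)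
  have "t \<in> Div G M d" using DivR_mem[OF bald] tM e1 by simp
  hence tN: "t \<in> N" using DivdN by auto
  have tdN: "t \<otimes> d \<in> N" using Nmult tN dN by simp
  have tdM: "t \<otimes> d \<in> M" using tdN NM by auto
  have "t \<otimes> d \<in> Div G M D" using DivR_mem[OF balD] tdM e2 by simp
  hence "t \<otimes> d \<in> Div G M d" using Divd tdN by simp
  hence "d \<otimes> inv (t \<otimes> d) \<in> M" using DivR_mem[OF bald] by simp
  hence "inv t \<in> M" using tc by (simp add: inv_mult_group)
  hence "t = \<one>" using Munit tM by simp
  hence "J = D" using Jc by (simp add: t_def) (metis Dc inv_closed inv_equality inv_inv)
  thus ?thesis using J3[OF X] by simp
qed

lemma C: "t \<in> M \<Longrightarrow> lq t (d [^] Suc j) \<Longrightarrow> lq t D \<Longrightarrow> lq t d"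
proof (induction j arbitrary: t)
  case 0 thus ?case by simp
next
  case (Suc j)
  have tc: "t \<in> carrier G" using Suc Mc by simp
  obtain u where U: "is_lubL G M t d u" using lub_ex[OF tc dc] by auto
  have uc: "u \<in> carrier G" and u1: "lq t u" and u2: "lq d u"
    and u3: "\<And>c. c \<in> carrier G \<Longrightarrow> lq t c \<Longrightarrow> lq d c \<Longrightarrow> lq u c"
    using U by (auto simp: is_lubL_def)
  have pe: "d [^] Suc (Suc j) = d \<otimes> d [^] Suc j" using nat_pow_Suc2[OF dc] by blast
  have "lq d (d [^] Suc (Suc j))" unfolding pe using lq_mult_M[OF dc powM[OF dM]] .
  hence l1: "lq u (d [^] Suc (Suc j))" using u3 Suc.prems by simp
  have l2: "lq u D" using u3 Suc.prems lq_d_D by simp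
  define e where "e = inv d \<otimes> u"
  have ec: "e \<in> carrier G" using uc by (simp add: e_def)
  have eM: "e \<in> M" using u2 by (simp add: e_def lq_def')
  have e1: "lq e (d [^] Suc j)" using lq_left[of "inv d" u "d \<otimes> d [^] Suc j"] l1 uc unfolding pe e_def by simp
  have e2: "lq e (inv d \<otimes> D)" using lq_left l2 uc by (simp add: e_def)
  have e3: "lq e D" using lq_trans[OF e2 lq_om_D] ec by simp
  have "lq e d" using Suc.IH[OF eM e1 e3] .
  hence "e = \<one>" using cop_d_om eM e2 by simp
  hence "u = d" using uc by (simp add: e_def) (metis dc inv_closed inv_equality inv_inv)
  thus ?case using u1 by simp
qed

lemma N_le: "w \<in> N \<Longrightarrow> \<exists>k. lq w (d [^] (k::nat))"
proof -
  assume "w \<in> N"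
  then obtain xs where "set xs \<subseteq> Div G M d" "w = lprod G xs" unfolding Ndef monoid_gen_def by blast
  thus ?thesis using lq_pow_list[OF bald] by blast
qed

lemma Hc: "H \<subseteq> carrier G" using Hdef generate_incl[OF Divdc] by auto
lemma H_inv: "h \<in> H \<Longrightarrow> inv h \<in> H" using Hdef generate_m_inv_closed[OF Divdc] by blast
lemma H_one: "\<one> \<in> H" using Hdef generate.one by auto

lemma Hform: "g \<in> H \<Longrightarrow> \<exists>(j::nat) w. w \<in> N \<and> g = inv (d [^] j) \<otimes> w"
proof -
  assume "g \<in> H"
  hence "g \<in> generate G (Div G M d)" using Hdef by simp
  thus ?thesis
  proof (induction rule: generate.induct)
    case one
    thus ?case using monoid_gen_one Ndef by (intro exI[of _ 0] exI[of _ \<one>]) auto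
  next
    case (incl h)
    hence "h \<in> carrier G" using Divdc by blast
    thus ?case using incl DivdN by (intro exI[of _ 0] exI[of _ h]) auto
  next
    case (inv h)
    have hc: "h \<in> carrier G" using inv Div_sub Mc by auto
    have "d \<otimes> inv h \<in> M" using inv DivR_mem[OF bald] by auto
    moreover have "inv (d \<otimes> inv h) \<otimes> d = h" using hc by (simp add: inv_mult_group m_assoc)
    ultimately have "d \<otimes> inv h \<in> Div G M d" using inv Div_sub by (auto simp: DivL_mem)
    hence "d \<otimes> inv h \<in> N" using DivdN by auto
    thus ?case using hc by (intro exI[of _ 1] exI[of _ "d \<otimes> inv h"]) simp
  next
    case (eng h1 h2)
    obtain i w where w: "w \<in> N" "h1 = inv (d [^] (i::nat)) \<otimes> w" using eng by auto
    obtain j v where v: "v \<in> N" "h2 = inv (d [^] (j::nat)) \<otimes> v" using eng by auto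
    have wc: "w \<in> carrier G" and vc: "v \<in> carrier G" using w v NM Mc by auto
    have n: "(d [^] j \<otimes> w \<otimes> inv (d [^] j)) \<otimes> v \<in> N" using conjN w v Nmult by simp
    have "inv (d [^] (j + i)) \<otimes> ((d [^] j \<otimes> w \<otimes> inv (d [^] j)) \<otimes> v) = h1 \<otimes> h2"
      using wc vc w v by (simp add: nat_pow_mult[symmetric] inv_mult_group m_assoc)
    thus ?case using n by metis
  qed
qed

lemma Hform2: "g \<in> H \<Longrightarrow> \<exists>(j::nat) w. w \<in> N \<and> g = w \<otimes> inv (d [^] j)"
proof -
  assume "g \<in> H"
  then obtain j w where w: "w \<in> N" "g = inv (d [^] (j::nat)) \<otimes> w" using Hform by blast
  have wc: "w \<in> carrier G" using w NM Mc by auto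
  have "inv (d [^] j) \<otimes> w \<otimes> d [^] j \<in> N" using conjN w by simp
  moreover have "g = (inv (d [^] j) \<otimes> w \<otimes> d [^] j) \<otimes> inv (d [^] j)" using w wc by (simp add: m_assoc)
  ultimately show ?thesis by blast
qed


lemma lemA: assumes h: "h \<in> H" and a: "a \<in> M"
  and cop: "\<And>c. c \<in> M \<Longrightarrow> lq c a \<Longrightarrow> lq c d \<Longrightarrow> c = \<one>"
  and l: "lq (h \<otimes> a) (D [^] (m::nat))"
  shows "lq a (D [^] m)"
proof -
  have hc: "h \<in> carrier G" using h Hc by auto
  have ac: "a \<in> carrier G" using a Mc by simp
  obtain j w where w: "w \<in> N" "inv h = w \<otimes> inv (d [^] (j::nat))" using Hform2 H_inv[OF h] by blast
  have wM: "w \<in> M" using w NM by auto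
  have wc: "w \<in> carrier G" using wM Mc by simp
  have "lq a (inv h \<otimes> D [^] m)" using lq_left[of "inv h" "h \<otimes> a" "D [^] m"] l hc ac by simp
  hence l1: "lq a (w \<otimes> (inv (d [^] j) \<otimes> D [^] m))" using hc ac wc w by (simp add: m_assoc)
  have "inv (D [^] m) \<otimes> d [^] j \<otimes> D [^] m \<in> M" using conjM powM[OF dM] by simp
  hence "lq (inv (d [^] j) \<otimes> D [^] m) (D [^] m)" by (simp add: lq_def' inv_mult_group m_assoc)
  hence "lq (w \<otimes> (inv (d [^] j) \<otimes> D [^] m)) (w \<otimes> D [^] m)" using lq_left[of w "inv (d [^] j) \<otimes> D [^] m" "D [^] m"] wc by simp
  hence l2: "lq a (w \<otimes> D [^] m)" using lq_trans[OF l1] ac wc by simp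
  obtain \<rho> where r: "\<rho> \<in> M" "lq \<rho> a" "lq \<rho> w" "\<rho> = \<one> \<longrightarrow> lq a (D [^] m)"
    using trick[OF a wM l2] by blast
  have rc: "\<rho> \<in> carrier G" using r Mc by simp
  have "\<rho> = \<one>"
  proof (rule ccontr)
    assume "\<rho> \<noteq> \<one>"
    then obtain s where s: "s \<in> Div G M D" "s \<noteq> \<one>" "lq s \<rho>" using nontriv r by blast
    have sM: "s \<in> M" and sc: "s \<in> carrier G" using s Div_sub Mc by auto
    obtain k where k: "lq w (d [^] (k::nat))" using N_le w by blast
    have dk: "lq (d [^] k) (d [^] Suc k)" using lq_mult_M[OF _ dM, of "d [^] k"] by simp
    have t1: "lq s w" by (rule lq_trans[OF s(3) r(3)]) (use sc rc wc in auto)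
    have t2: "lq s (d [^] k)" by (rule lq_trans[OF t1 k]) (use sc wc in auto)
    have "lq s (d [^] Suc k)" by (rule lq_trans[OF t2 dk]) (use sc in auto)
    moreover have "lq s D" using s by (simp add: DivL_mem lq_def')
    ultimately have "lq s d" using C sM by blast
    moreover have "lq s a" using lq_trans[OF s(3) r(2)] sc rc ac by simp
    ultimately show False using cop sM s(2) by blast
  qed
  thus ?thesis using r by simp
qed

lemma W: "y \<in> M \<Longrightarrow> lq D (d [^] Suc j \<otimes> y) \<Longrightarrow> lq D (d \<otimes> y)"
proof (induction j)
  case 0 thus ?case by simp
next
  case (Suc j)
  have yc: "y \<in> carrier G" using Suc Mc by simp
  define y' where "y' = d [^] j \<otimes> y"
  have y'M: "y' \<in> M" using Mmult powM[OF dM] Suc by (simp add: y'_def)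
  have y'c: "y' \<in> carrier G" using y'M Mc by simp
  have e: "d [^] Suc (Suc j) \<otimes> y = d \<otimes> (d \<otimes> y')" using yc
    by (simp only: nat_pow_Suc2[OF dc]) (simp add: y'_def m_assoc)
  from Suc.prems(2) have l0: "lq D (d \<otimes> (d \<otimes> y'))" by (simp only: e)
  have "lq (inv d \<otimes> D) (d \<otimes> y')" using lq_left[of "inv d" D "d \<otimes> (d \<otimes> y')"] l0 y'c by simp
  moreover have "lq d (d \<otimes> y')" using lq_mult_M y'M by simp
  ultimately have "lq D (d \<otimes> y')" using join_om_d y'c by simp
  moreover have eq: "d \<otimes> y' = d [^] Suc j \<otimes> y" using yc
    by (simp only: nat_pow_Suc2[OF dc]) (simp add: y'_def m_assoc)
  ultimately have "lq D (d [^] Suc j \<otimes> y)" by (simp only: eq)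
  thus ?case using Suc.IH Suc.prems(1) by blast
qed

lemma lemB: assumes h: "h \<in> H" and a: "a \<in> M" and n1: "\<not> lq D a" and n2: "\<not> lq (inv d \<otimes> D) a"
  shows "\<not> lq D (h \<otimes> a)"
proof
  assume l: "lq D (h \<otimes> a)"
  have hc: "h \<in> carrier G" using h Hc by auto
  have ac: "a \<in> carrier G" using a Mc by simp
  obtain j w where w: "w \<in> N" "inv h = inv (d [^] (j::nat)) \<otimes> w" using Hform H_inv[OF h] by blast
  have wM: "w \<in> M" using w NM by auto
  have wc: "w \<in> carrier G" using wM Mc by simp
  have "lq (inv h \<otimes> D) a" using lq_left[of "inv h" D "h \<otimes> a"] l hc ac by simp
  hence "lq (inv (d [^] j) \<otimes> (w \<otimes> D)) a" using hc ac wc w by (simp add: m_assoc)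
  hence l1: "lq (w \<otimes> D) (d [^] j \<otimes> a)"
    using lq_left[of "d [^] j" "inv (d [^] j) \<otimes> (w \<otimes> D)" a] wc ac by simp
  have "lq D (w \<otimes> D)" using conjM1[OF wM] wc by (simp add: lq_def' m_assoc)
  hence l2: "lq D (d [^] j \<otimes> a)" using lq_trans[OF _ l1] wc ac by simp
  show False
  proof (cases j)
    case 0 thus False using l2 n1 ac by simp
  next
    case (Suc j')
    have l3: "lq D (d [^] Suc j' \<otimes> a)" using l2 unfolding Suc .
    hence l4: "lq D (d \<otimes> a)" by (rule W[OF a])
    hence "lq (inv d \<otimes> D) (inv d \<otimes> (d \<otimes> a))" using lq_left[of "inv d" D "d \<otimes> a"] ac by simp
    thus False using n2 ac by simp
  qed
qed

lemma cop_of: assumes "N_reduced G M d a"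
  shows "\<And>c. c \<in> M \<Longrightarrow> lq c a \<Longrightarrow> lq c d \<Longrightarrow> c = \<one>"
proof -
  fix c assume c: "c \<in> M" "lq c a" "lq c d"
  have a: "a \<in> M" and m: "meetL G M a d = \<one>" using assms by (auto simp: N_reduced_def)
  have ac: "a \<in> carrier G" using a Mc by simp
  obtain g where g: "is_glbL G M a d g" using glb_ex[OF ac dc] by auto
  have uniq: "\<And>g'. is_glbL G M a d g' \<Longrightarrow> g' = g"
    using g by (auto simp: is_glbL_def intro: lq_antisym)
  have "meetL G M a d = g" unfolding meetL_def using g uniq by (rule the_equality)
  hence "is_glbL G M a d \<one>" using g m by simp
  hence "lq c \<one>" using c Mc by (auto simp: is_glbL_def)
  thus "c = \<one>" using lq_M_one c by simp
qed

end
context para begin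

lemma lower: assumes h: "h \<in> H" and a: "a \<in> M" and n1: "\<not> lq D a"
  and cop: "\<And>c. c \<in> M \<Longrightarrow> lq c a \<Longrightarrow> lq c d \<Longrightarrow> c = \<one>"
  and p: "p = (0::int) \<or> (p < 0 \<and> \<not> lq (inv d \<otimes> D) a)"
  and xs: "set xs \<subseteq> LL" "lprod G xs = h \<otimes> (a \<otimes> D [^] p)"
  shows "(if p = 0 then (LEAST r. lq a (D [^] (r::nat))) else max (LEAST r. lq a (D [^] (r::nat))) (nat (-p))) \<le> length xs"
proof -
  have hc: "h \<in> carrier G" using h Hc by auto
  have ac: "a \<in> carrier G" using a Mc by simp
  obtain k l where kl: "k + l = length xs" "lq (lprod G xs) (D [^] (k::nat))" "lq (inv (D [^] (l::nat))) (lprod G xs)"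
    using word_bounds[OF xs(1)] by blast
  show ?thesis
  proof (cases "p = 0")
    case True
    hence "lq (h \<otimes> a) (D [^] k)" using kl xs ac by simp
    hence "lq a (D [^] k)" using lemA h a cop by blast
    hence "(LEAST r. lq a (D [^] (r::nat))) \<le> k" by (rule Least_le)
    thus ?thesis using True kl by simp
  next
    case False
    from p False have p2: "p < 0" "\<not> lq (inv d \<otimes> D) a" by blast+
    define q where "q = nat (-p)"
    have pq0: "D [^] p = (if p < 0 then inv (D [^] nat (-p)) else D [^] nat p)" by (rule int_pow_def2)
    have pq: "D [^] p = inv (D [^] q)" unfolding q_def using pq0 p2(1) by (simp only: if_True)
    have e: "lprod G xs = h \<otimes> a \<otimes> inv (D [^] q)" using xs pq hc ac by (simp add: m_assoc)
    have k2: "lq (h \<otimes> a \<otimes> inv (D [^] q)) (D [^] k)" using kl(2) unfolding e .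
    have k3: "lq (inv (D [^] l)) (h \<otimes> a \<otimes> inv (D [^] q))" using kl(3) unfolding e .
    have "lq (h \<otimes> a \<otimes> inv (D [^] q) \<otimes> D [^] q) (D [^] k \<otimes> D [^] q)"
      by (rule lq_rmult[OF _ _ k2]) (use hc ac in auto)
    hence "lq (h \<otimes> a) (D [^] (k + q))" using hc ac by (simp add: m_assoc nat_pow_mult)
    hence "lq a (D [^] (k + q))" using lemA h a cop by blast
    hence r1: "(LEAST r. lq a (D [^] (r::nat))) \<le> k + q" by (rule Least_le)
    have r2: "q \<le> l"
    proof (rule ccontr)
      assume "\<not> q \<le> l"
      hence "l < q" by simp
      define t where "t = q - l - 1"
      have t: "q = l + Suc t" using \<open>l < q\<close> unfolding t_def by linarith
      have F: "lq (inv (D [^] l) \<otimes> D [^] q) (h \<otimes> a \<otimes> inv (D [^] q) \<otimes> D [^] q)"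
        by (rule lq_rmult[OF _ _ k3]) (use hc ac in auto)
      have eq0: "D [^] l \<otimes> D [^] (Suc t) = D [^] q" unfolding t by (rule nat_pow_mult[OF Dc])
      have "inv (D [^] l) \<otimes> D [^] q = inv (D [^] l) \<otimes> (D [^] l \<otimes> D [^] Suc t)" by (simp only: eq0)
      also have "\<dots> = D [^] Suc t" by (rule inv_cancel_l) simp_all
      finally have eqX: "inv (D [^] l) \<otimes> D [^] q = D [^] Suc t" .
      have eqY: "h \<otimes> a \<otimes> inv (D [^] q) \<otimes> D [^] q = h \<otimes> a" using hc ac by (simp add: m_assoc)
      have F2: "lq (D [^] Suc t) (h \<otimes> a)" using F unfolding eqX eqY .
      have F3: "lq D (D [^] Suc t)" using lq_mult_M[OF Dc powM[OF DM], of t] 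
        by (simp only: nat_pow_Suc2[OF Dc])
      have "lq D (h \<otimes> a)" by (rule lq_trans[OF F3 F2]) (use hc ac in auto)
      thus False using lemB[OF h a n1 p2(2)] by simp
    qed
    show ?thesis using False r1 r2 kl by (simp add: q_def)
  qed
qed

lemma upper: assumes a: "a \<in> M"
  and p: "p = (0::int) \<or> p < 0"
  shows "hw (a \<otimes> D [^] p) (if p = 0 then (LEAST r. lq a (D [^] (r::nat))) else max (LEAST r. lq a (D [^] (r::nat))) (nat (-p)))"
proof -
  have ac: "a \<in> carrier G" using a Mc by simp
  obtain r0 where "lq a (D [^] (r0::nat))" using M_le a by blast
  hence l: "lq a (D [^] (LEAST r. lq a (D [^] (r::nat))))" by (rule LeastI)
  show ?thesis
  proof (cases "p = 0")
    case True thus ?thesis using hw_nf[OF a l] ac by simp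
  next
    case False
    have pq0: "D [^] p = (if p < 0 then inv (D [^] nat (-p)) else D [^] nat p)" by (rule int_pow_def2)
    have "p < 0" using p False by blast
    hence "D [^] p = inv (D [^] nat (-p))" using pq0 by (simp only: if_True)
    thus ?thesis using hw_neg[OF a l] False by simp
  qed
qed

theorem main: assumes th: "HN_reduced G M D d \<theta>"
  shows "word_len G SS \<theta> = set_len G SS (H #> \<theta>)"
proof -
  obtain a p where ap: "unmovable G M D a" "\<theta> = a \<otimes> D [^] (p::int)" "N_reduced G M d a"
    "p = 0 \<or> (p < 0 \<and> \<not> lq (inv d \<otimes> D) a)" and thc: "\<theta> \<in> carrier G"
    using th unfolding HN_reduced_def by blast
  have a: "a \<in> M" and n1: "\<not> lq D a" using ap by (auto simp: unmovable_def)
  note cop = cop_of[OF ap(3)]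
  define L where "L = (if p = 0 then (LEAST r. lq a (D [^] (r::nat))) else max (LEAST r. lq a (D [^] (r::nat))) (nat (-p)))"
  have lowb: "\<And>h xs. h \<in> H \<Longrightarrow> set xs \<subseteq> LL \<Longrightarrow> lprod G xs = h \<otimes> \<theta> \<Longrightarrow> L \<le> length xs"
    using lower[OF _ a n1 cop ap(4)] ap(2) unfolding L_def by blast
  have wl_ge: "\<And>h. h \<in> H \<Longrightarrow> L \<le> word_len G SS (h \<otimes> \<theta>)"
  proof -
    fix h assume h: "h \<in> H"
    have "h \<otimes> \<theta> \<in> carrier G" using h Hc thc by auto
    then obtain n where "hw (h \<otimes> \<theta>) n" using word_exists by blast
    then obtain ys where ys: "set ys \<subseteq> LL" "lprod G ys = h \<otimes> \<theta>" unfolding hw_def by blast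
    hence "\<exists>n xs. length xs = n \<and> set xs \<subseteq> LL \<and> lprod G xs = h \<otimes> \<theta>" by blast
    hence "\<exists>xs. length xs = word_len G SS (h \<otimes> \<theta>) \<and> set xs \<subseteq> LL \<and> lprod G xs = h \<otimes> \<theta>"
      unfolding word_len_def by (rule LeastI_ex)
    then obtain xs where xs: "length xs = word_len G SS (h \<otimes> \<theta>)" "set xs \<subseteq> LL" "lprod G xs = h \<otimes> \<theta>" by blast
    have "L \<le> length xs" by (rule lowb[OF h xs(2) xs(3)])
    thus "L \<le> word_len G SS (h \<otimes> \<theta>)" using xs(1) by simp
  qed
  have "p = 0 \<or> p < 0" using ap(4) by blast
  from upper[OF a this] have "hw \<theta> L" unfolding L_def ap(2) .
  then obtain xs where xs: "length xs \<le> L" "set xs \<subseteq> LL" "lprod G xs = \<theta>" unfolding hw_def by blast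
  have "word_len G SS \<theta> \<le> length xs" unfolding word_len_def using xs by (intro Least_le) blast
  moreover have "L \<le> word_len G SS \<theta>" using wl_ge[OF H_one] thc by simp
  ultimately have wl: "word_len G SS \<theta> = L" using xs by simp
  have mem: "\<theta> \<in> H #> \<theta>" using H_one thc by (force simp: r_coset_def)
  have "set_len G SS (H #> \<theta>) = word_len G SS \<theta>"
    unfolding set_len_def
  proof (rule Least_equality)
    show "\<exists>\<beta>\<in>H #> \<theta>. word_len G SS \<beta> = word_len G SS \<theta>" using mem by blast
  next
    fix y assume "\<exists>\<beta>\<in>H #> \<theta>. word_len G SS \<beta> = y"
    then obtain h where "h \<in> H" "y = word_len G SS (h \<otimes> \<theta>)" by (auto simp: r_coset_def)
    thus "word_len G SS \<theta> \<le> y" using wl wl_ge by simp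
  qed
  thus ?thesis by simp
qed

end


theorem theorem3p4:
  fixes G :: "('a, 'b) monoid_scheme" and M H N :: "'a set" and \<Delta> \<delta> \<theta> :: 'a
  assumes "garside G M \<Delta>"
    and "parabolic G M \<Delta> H N \<delta>"
    and "H \<noteq> {\<one>\<^bsub>G\<^esub>}"
    and "HN_reduced G M \<Delta> \<delta> \<theta>"
  shows "word_len G (Div G M \<Delta> - {\<one>\<^bsub>G\<^esub>}) \<theta>
         = set_len G (Div G M \<Delta> - {\<one>\<^bsub>G\<^esub>}) (H #>\<^bsub>G\<^esub> \<theta>)"
proof -
  have g: "gar G M \<Delta>" using assms(1)
    unfolding garside_def gar_def gar_axioms_def is_submonoid_def by blast
  have "para G M \<Delta> \<delta> N H" using assms(2) g
    unfolding parabolic_def para_def para_axioms_def by blast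
  then interpret para G M \<Delta> \<delta> N H .
  show ?thesis using main[OF assms(4)] .
qed

end
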